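(* Assume (A1)–(A4) and let $b\in\mathcal H$ be consistent. Then the optimization problem $$\min\{ f(Wx) : x\in\mathscr D(W),\ Ax=b\}$$ admits a unique solution $x^*\in\mathscr D(W)$, and it satisfies $Wx^*\in\mathscr D(f)$.
   Context: $\mathcal X,\mathcal Y,\mathcal H$ are real Hilbert spaces. Standing assumptions: (A1) $A:\mathcal X\to\mathcal H$ is a bounded linear operator. (A2) $f:\mathcal Y\to(-\infty,\infty]$ is proper, lower semicontinuous and strongly convex with constant $c_0>0$, i.e. $f(ty_1+(1-t)y_2)+c_0t(1-t)\|y_1-y_2\|^2\le tf(y_1)+(1-t)f(y_2)$ for all $y_1,y_2\in\mathcal Y$, $t\in[0,1]$. (A3) $W:\mathscr D(W)\subset\mathcal X\to\mathcal Y$ is a densely defined closed linear operator with domain $\mathscr D(W)$. (A4) There is $c_1>0$ with $\|Ax\|^2+\|Wx\|^2\ge c_1\|x\|^2$ for all $x\in\mathscr D(W)$. $\mathscr D(f)=\{y: f(y)<\infty\}$. The data $b\in\mathcal H$ is called consistent if $b=Ax$ for some $x\in\mathscr D(W)$ with $Wx\in\mathscr D(f)$. *)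

theory Defs
  imports "HOL-Analysis.Analysis"
begin

text \<open>Extended-real valued functions f : Y -> (-infinity, infinity] are modelled as
  functions into ereal that never take the value -infinity.\<close>

definition proper_fun :: "('a \<Rightarrow> ereal) \<Rightarrow> bool" where
  "proper_fun f \<longleftrightarrow> (\<forall>y. f y \<noteq> -\<infinity>) \<and> (\<exists>y. f y \<noteq> \<infinity>)"

definition lower_semicontinuous :: "('a::topological_space \<Rightarrow> ereal) \<Rightarrow> bool" where
  "lower_semicontinuous f \<longleftrightarrow> (\<forall>a::ereal. closed {y. f y \<le> a})"

definition effective_domain :: "('a \<Rightarrow> ereal) \<Rightarrow> 'a set" where
  "effective_domain f = {y. f y < \<infinity>}"

definition strongly_convex :: "real \<Rightarrow> ('a::real_normed_vector \<Rightarrow> ereal) \<Rightarrow> bool" where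
  "strongly_convex c f \<longleftrightarrow>
     (\<forall>y1 y2 t. 0 \<le> t \<and> t \<le> 1 \<longrightarrow>
        f (t *\<^sub>R y1 + (1 - t) *\<^sub>R y2) + ereal (c * t * (1 - t) * (norm (y1 - y2))\<^sup>2)
          \<le> ereal t * f y1 + ereal (1 - t) * f y2)"

definition linear_operator_on :: "'a::real_vector set \<Rightarrow> ('a \<Rightarrow> 'b::real_vector) \<Rightarrow> bool" where
  "linear_operator_on D W \<longleftrightarrow> subspace D \<and>
     (\<forall>x\<in>D. \<forall>y\<in>D. W (x + y) = W x + W y) \<and>
     (\<forall>x\<in>D. \<forall>c. W (c *\<^sub>R x) = c *\<^sub>R W x)"

definition densely_defined :: "'a::topological_space set \<Rightarrow> bool" where
  "densely_defined D \<longleftrightarrow> closure D = UNIV"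

definition closed_operator :: "'a::topological_space set \<Rightarrow> ('a \<Rightarrow> 'b::topological_space) \<Rightarrow> bool" where
  "closed_operator D W \<longleftrightarrow> closed {(x, W x) | x. x \<in> D}"

end

theory Submission imports Defs begin
lemma sc_lower_bound:
  fixes f :: "'y::real_normed_vector \<Rightarrow> ereal"
  assumes "proper_fun f" "lower_semicontinuous f" "c0 > 0" "strongly_convex c0 f"
  shows "\<exists>L::real. \<forall>y. ereal L \<le> f y"
proof -
  obtain u where u: "f u \<noteq> \<infinity>" using assms(1) unfolding proper_fun_def by auto
  have "f u \<noteq> -\<infinity>" using assms(1) unfolding proper_fun_def by auto
  then obtain fu where fu: "f u = ereal fu" using u by (cases "f u") auto
  have cl: "closed {y. f y \<le> ereal (fu - 1)}" using assms(2) unfolding lower_semicontinuous_def by blast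
  have "u \<in> - {y. f y \<le> ereal (fu - 1)}" using fu by simp
  then obtain d where d: "d > 0" "ball u d \<subseteq> - {y. f y \<le> ereal (fu - 1)}"
    using cl open_contains_ball by (metis open_Compl)
  have near: "ereal (fu - 1) < f z" if "dist u z < d" for z
    using d that by (auto simp: subset_eq not_le)
  define L where "L = fu - 1 - 2 / (c0 * d^2)"
  have "ereal L \<le> f y" for y
  proof (cases "norm (y - u) < d")
    case True
    then have "ereal (fu - 1) < f y" using near by (simp add: dist_norm norm_minus_commute)
    moreover have "L \<le> fu - 1" unfolding L_def using assms(3) d by simp
    ultimately show ?thesis by (meson ereal_less_eq(3) less_imp_le order_trans)
  next
    case False
    define r where "r = norm (y - u)"
    have rd: "r \<ge> d" using False r_def by simp
    have rpos: "r > 0" using rd d by simp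
    define t where "t = d / (2 * r)"
    have t0: "0 < t" and t1: "t \<le> 1/2" using d rd rpos by (auto simp: t_def field_simps)
    define z where "z = t *\<^sub>R y + (1 - t) *\<^sub>R u"
    have "z - u = t *\<^sub>R (y - u)" by (simp add: z_def algebra_simps)
    then have "dist u z = t * r" using t0 by (simp add: dist_norm norm_minus_commute[of u z] r_def)
    also have "\<dots> = d / 2" using rpos by (simp add: t_def)
    finally have fz: "ereal (fu - 1) < f z" using near d by simp
    have sc: "f z + ereal (c0 * t * (1 - t) * r^2) \<le> ereal t * f y + ereal (1 - t) * f u"
      using assms(4) t0 t1 unfolding strongly_convex_def z_def r_def by simp
    show ?thesis
    proof (cases "f y")
      case (real v)
      have "ereal (fu - 1 + c0 * t * (1 - t) * r^2) < f z + ereal (c0 * t * (1 - t) * r^2)"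
        using fz by (cases "f z") auto
      also have "\<dots> \<le> ereal (t * v + (1 - t) * fu)" using sc real fu by simp
      finally have ineq: "fu - 1 + c0 * t * (1 - t) * r^2 < t * v + (1 - t) * fu" by simp
      then have "t * (v - fu) > c0 * t * (1 - t) * r^2 - 1" by (simp add: algebra_simps)
      then have "v - fu > c0 * (1 - t) * r^2 - 1 / t" using t0
        by (simp add: field_simps)
      moreover have "c0 * (1 - t) * r^2 \<ge> c0 * r^2 / 2"
      proof -
        have "c0 * r^2 * (1/2) \<le> c0 * r^2 * (1 - t)" using t1 assms(3)
          by (intro mult_left_mono) auto
        then show ?thesis by (simp add: algebra_simps)
      qed
      moreover have "1 / t = 2 * r / d" using d rpos by (simp add: t_def)
      moreover have "c0 * r^2 / 2 - 2 * r / d \<ge> - 2 / (c0 * d^2)"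
      proof -
        have "0 \<le> c0 / 2 * (r - 2 / (c0 * d))^2" using assms(3) by simp
        also have "\<dots> = c0 * r^2 / 2 - 2 * r / d + 2 / (c0 * d^2)"
          using assms(3) d by (simp add: power2_eq_square field_simps)
        finally show ?thesis by simp
      qed
      ultimately have "v \<ge> L" unfolding L_def by linarith
      then show ?thesis using real by simp
    next
      case PInf then show ?thesis by simp
    next
      case MInf then show ?thesis using assms(1) unfolding proper_fun_def by auto
    qed
  qed
  then show ?thesis by blast
qed
lemma divbound: fixes c x k z :: real assumes "c > 0" "c * x \<le> k * z" shows "x \<le> (k/c) * z"
proof -
  have "x = (c * x) / c" using assms(1) by simp
  also have "\<dots> \<le> (k * z) / c" using assms by (simp add: pos_le_divide_eq mult.commute)
  finally show ?thesis by simp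
qed

lemma cauchy_aux:
  fixes X :: "nat \<Rightarrow> 'a::real_normed_vector"
  assumes K: "K \<ge> 0" and b: "\<And>m n. (norm (X m - X n))^2 \<le> K * (1/(real m+1) + 1/(real n+1))"
  shows "Cauchy X"
proof (rule metric_CauchyI)
  fix e :: real assume e: "e > 0"
  obtain N :: nat where N: "2 * K / e^2 < real N" using reals_Archimedean2 by blast
  have N2: "2 * K < e^2 * (real N + 1)"
  proof -
    have "2 * K / e^2 < real N + 1" using N by simp
    then show ?thesis using e by (simp add: field_simps)
  qed
  have "dist (X m) (X n) < e" if "m \<ge> N" "n \<ge> N" for m n
  proof -
    have "1 / (real m + 1) \<le> 1 / (real N + 1)" using that by (simp add: frac_le)
    moreover have "1 / (real n + 1) \<le> 1 / (real N + 1)" using that by (simp add: frac_le)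
    ultimately have "1/(real m+1) + 1/(real n+1) \<le> 2 / (real N + 1)" by simp
    then have "K * (1/(real m+1) + 1/(real n+1)) \<le> K * (2 / (real N + 1))"
      using K by (intro mult_left_mono) auto
    also have "\<dots> < e^2" using N2 by (simp add: field_simps)
    finally have "(norm (X m - X n))^2 < e^2" using b[of m n] by linarith
    then show ?thesis using e by (simp add: dist_norm power2_less_imp_less)
  qed
  then show "\<exists>M. \<forall>m\<ge>M. \<forall>n\<ge>M. dist (X m) (X n) < e" by blast
qed

theorem theorem2p1:
  fixes A :: "'x::{real_inner,complete_space} \<Rightarrow> 'h::{real_inner,complete_space}"
    and f :: "'y::{real_inner,complete_space} \<Rightarrow> ereal"
    and W :: "'x \<Rightarrow> 'y"
    and D :: "'x set"
    and c0 c1 :: real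
    and b :: 'h
  assumes A1: "bounded_linear A"
    and A2: "proper_fun f" "lower_semicontinuous f" "c0 > 0" "strongly_convex c0 f"
    and A3: "linear_operator_on D W" "densely_defined D" "closed_operator D W"
    and A4: "c1 > 0" "\<forall>x\<in>D. (norm (A x))\<^sup>2 + (norm (W x))\<^sup>2 \<ge> c1 * (norm x)\<^sup>2"
    and consistent: "\<exists>x\<in>D. A x = b \<and> W x \<in> effective_domain f"
  shows "(\<exists>!xs. xs \<in> D \<and> A xs = b \<and> (\<forall>x\<in>D. A x = b \<longrightarrow> f (W xs) \<le> f (W x))) \<and>
         (\<forall>xs. xs \<in> D \<and> A xs = b \<and> (\<forall>x\<in>D. A x = b \<longrightarrow> f (W xs) \<le> f (W x))
            \<longrightarrow> W xs \<in> effective_domain f)"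
proof -
  define S where "S = {x\<in>D. A x = b}"
  obtain L where L: "\<And>y. ereal L \<le> f y" using sc_lower_bound[OF A2] by blast
  obtain x0 where x0: "x0 \<in> S" "f (W x0) < \<infinity>"
    using consistent unfolding S_def effective_domain_def by auto
  have sub: "subspace D" and Wadd: "\<And>x y. x \<in> D \<Longrightarrow> y \<in> D \<Longrightarrow> W (x + y) = W x + W y"
    and Wsc: "\<And>x c. x \<in> D \<Longrightarrow> W (c *\<^sub>R x) = c *\<^sub>R W x"
    using A3(1) unfolding linear_operator_on_def by auto
  have lin: "linear A" using A1 bounded_linear.linear by blast
  have Wdiff: "W (x - y) = W x - W y" if "x \<in> D" "y \<in> D" for x y
  proof -
    have "(-1) *\<^sub>R y \<in> D" using sub that by (metis subspace_scale)
    then have "W (x + (-1) *\<^sub>R y) = W x + W ((-1) *\<^sub>R y)" using Wadd that by blast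
    also have "W ((-1) *\<^sub>R y) = (-1) *\<^sub>R W y" using Wsc that by blast
    finally show ?thesis by simp
  qed
  have fin: "\<exists>a. f y = ereal a" if "f y < \<infinity>" for y
    using that L[of y] by (cases "f y") auto
  have nb: "c1 * (norm (x - y))^2 \<le> (norm (W x - W y))^2" if "x \<in> S" "y \<in> S" for x y
  proof -
    have "x - y \<in> D" using that sub unfolding S_def by (simp add: subspace_diff)
    moreover have "A (x - y) = 0" using that lin unfolding S_def by (simp add: linear_diff)
    ultimately show ?thesis using A4(2) Wdiff[of x y] that unfolding S_def by force
  qed
  have mid: "\<exists>p\<in>S. f (W p) \<le> ereal ((a + a')/2 - c0/4 * (norm (W x - W y))^2)"
    if "x \<in> S" "y \<in> S" "f (W x) = ereal a" "f (W y) = ereal a'" for x y a a'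
  proof -
    define p where "p = (1/2) *\<^sub>R x + (1/2) *\<^sub>R y"
    have xD: "x \<in> D" and yD: "y \<in> D" using that unfolding S_def by auto
    have pD: "p \<in> D" unfolding p_def using sub xD yD
      by (simp add: subspace_add subspace_scale)
    have "A p = (1/2) *\<^sub>R b + (1/2) *\<^sub>R b" using that lin unfolding p_def S_def
      by (simp add: linear_add linear_scale)
    then have pS: "p \<in> S" using pD unfolding S_def by (simp add: scaleR_add_left[symmetric])
    have Wp: "W p = (1/2) *\<^sub>R W x + (1 - 1/2) *\<^sub>R W y"
      unfolding p_def using Wadd Wsc xD yD sub by (simp add: subspace_scale)
    have sc0: "\<And>y1 y2 t. 0 \<le> t \<Longrightarrow> t \<le> 1 \<Longrightarrow>
        f (t *\<^sub>R y1 + (1 - t) *\<^sub>R y2) + ereal (c0 * t * (1 - t) * (norm (y1 - y2))\<^sup>2)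
          \<le> ereal t * f y1 + ereal (1 - t) * f y2"
      using A2(4) unfolding strongly_convex_def by blast
    have sc: "f (W p) + ereal (c0 * (1/2) * (1 - 1/2) * (norm (W x - W y))\<^sup>2)
          \<le> ereal (1/2) * f (W x) + ereal (1 - 1/2) * f (W y)"
      unfolding Wp by (rule sc0) simp_all
    have "f (W p) \<le> ereal ((a + a')/2 - c0/4 * (norm (W x - W y))^2)"
    proof (cases "f (W p)")
      case (real w)
      then show ?thesis using sc that by (simp add: field_simps)
    next
      case PInf then show ?thesis using sc that by simp
    next
      case MInf then show ?thesis using A2(1) unfolding proper_fun_def by auto
    qed
    then show ?thesis using pS by blast
  qed
  define m where "m = (INF x\<in>S. f (W x))"
  have mL: "ereal L \<le> m" unfolding m_def using L by (rule INF_greatest)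
  have mU: "m \<le> f (W x0)" unfolding m_def using x0(1) by (rule INF_lower)
  obtain mr where mr: "m = ereal mr" using mL mU x0(2) by (cases m) auto
  have mle: "ereal mr \<le> f (W x)" if "x \<in> S" for x
    using that INF_lower[of x S "\<lambda>x. f (W x)"] unfolding m_def mr[symmetric] by simp
  have "\<forall>n::nat. \<exists>x\<in>S. f (W x) < ereal (mr + 1/(real n + 1))"
  proof
    fix n :: nat
    have "m < ereal (mr + 1/(real n + 1))" using mr by simp
    then show "\<exists>x\<in>S. f (W x) < ereal (mr + 1/(real n + 1))"
      unfolding m_def by (simp add: INF_less_iff)
  qed
  then obtain xs where xs: "\<And>n. xs n \<in> S" "\<And>n. f (W (xs n)) < ereal (mr + 1/(real n + 1))"
    by metis
  define a where "a n = real_of_ereal (f (W (xs n)))" for n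
  have fa: "f (W (xs n)) = ereal (a n)" for n
    using fin[of "W (xs n)"] xs(2)[of n] unfolding a_def by force
  have a_lo: "mr \<le> a n" and a_hi: "a n < mr + 1/(real n + 1)" for n
    using mle[OF xs(1)[of n]] xs(2)[of n] fa[of n] by auto
  have Wb: "(norm (W (xs i) - W (xs j)))^2 \<le> (2/c0) * (1/(real i+1) + 1/(real j+1))" for i j
  proof -
    define q where "q = (norm (W (xs i) - W (xs j)))^2"
    define s where "s = 1/(real i+1) + 1/(real j+1)"
    obtain p where p: "p \<in> S" "f (W p) \<le> ereal ((a i + a j)/2 - c0/4 * q)"
      using mid[OF xs(1)[of i] xs(1)[of j] fa fa] unfolding q_def by blast
    have "ereal mr \<le> ereal ((a i + a j)/2 - c0/4 * q)"
      using mle[OF p(1)] p(2) by (rule order_trans)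
    then have h: "mr \<le> (a i + a j)/2 - c0/4 * q" by (simp only: ereal_less_eq(3))
    have e4: "c0/4 * q = (c0 * q) / 4" by simp
    define cq where "cq = c0 * q"
    have h2: "mr \<le> (a i + a j)/2 - cq / 4" using h unfolding e4 cq_def .
    define ui where "ui = 1/(real i+1)"
    define uj where "uj = 1/(real j+1)"
    have "a i < mr + ui" "a j < mr + uj" using a_hi[of i] a_hi[of j] unfolding ui_def uj_def by auto
    then have "cq \<le> 2 * s" using h2 unfolding s_def ui_def[symmetric] uj_def[symmetric] by (simp add: field_simps)
    then have "c0 * q \<le> 2 * s" unfolding cq_def .
    then have "q \<le> (2/c0) * s" by (rule divbound[OF A2(3)])
    then show ?thesis unfolding q_def s_def .
  qed
  have xb: "(norm (xs i - xs j))^2 \<le> (2/(c0*c1)) * (1/(real i+1) + 1/(real j+1))" for i j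
  proof -
    define s where "s = 1/(real i+1) + 1/(real j+1)"
    have "c1 * (norm (xs i - xs j))^2 \<le> (2/c0) * s"
      using nb[OF xs(1)[of i] xs(1)[of j]] Wb[of i j] unfolding s_def by linarith
    then have "(norm (xs i - xs j))^2 \<le> ((2/c0)/c1) * s"
      by (rule divbound[OF A4(1)])
    moreover have "(2/c0)/c1 = 2/(c0*c1)" by simp
    ultimately show ?thesis unfolding s_def by simp
  qed
  have K1: "0 \<le> 2/(c0*c1)" using A2(3) A4(1) by simp
  have K2: "0 \<le> 2/c0" using A2(3) by simp
  have "Cauchy xs" by (rule cauchy_aux[OF K1 xb])
  then obtain xst where xst: "xs \<longlonglongrightarrow> xst" using convergent_eq_Cauchy by blast
  have "Cauchy (\<lambda>n. W (xs n))" by (rule cauchy_aux[OF K2 Wb])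
  then obtain yst where yst: "(\<lambda>n. W (xs n)) \<longlonglongrightarrow> yst" using convergent_eq_Cauchy by blast
  have lim2: "(\<lambda>n. (xs n, W (xs n))) \<longlonglongrightarrow> (xst, yst)" using xst yst by (rule tendsto_Pair)
  have inG: "\<And>n. (xs n, W (xs n)) \<in> {(x, W x) | x. x \<in> D}" using xs(1) unfolding S_def by auto
  have clG: "closed {(x, W x) | x. x \<in> D}" using A3(3) unfolding closed_operator_def .
  have "(xst, yst) \<in> {(x, W x) | x. x \<in> D}" by (rule closed_sequentially[OF clG inG lim2])
  then have xstD: "xst \<in> D" and ysteq: "yst = W xst" by auto
  have limA: "(\<lambda>n. A (xs n)) \<longlonglongrightarrow> A xst" by (rule bounded_linear.tendsto[OF A1 xst])
  have "(\<lambda>n. A (xs n)) = (\<lambda>n. b)" using xs(1) unfolding S_def by auto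
  then have limb: "(\<lambda>n. A (xs n)) \<longlonglongrightarrow> b" by simp
  have "A xst = b" by (rule LIMSEQ_unique[OF limA limb])
  then have xstS: "xst \<in> S" using xstD unfolding S_def by simp
  have bnd: "f (W xst) \<le> ereal (mr + 1/(real N + 1))" for N :: nat
  proof -
    have cl: "closed {y. f y \<le> ereal (mr + 1/(real N + 1))}"
      using A2(2) unfolding lower_semicontinuous_def by blast
    have l1: "(\<lambda>n. W (xs (n + N))) \<longlonglongrightarrow> yst" using LIMSEQ_ignore_initial_segment[OF yst] by simp
    have l2: "\<And>n. W (xs (n + N)) \<in> {y. f y \<le> ereal (mr + 1/(real N + 1))}"
    proof -
      fix n
      have "1/(real (n + N) + 1) \<le> 1/(real N + 1)" by (simp add: frac_le)
      then have "ereal (mr + 1/(real (n + N) + 1)) \<le> ereal (mr + 1/(real N + 1))" by simp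
      then have "f (W (xs (n + N))) \<le> ereal (mr + 1/(real N + 1))"
        using xs(2)[of "n + N"] by (meson less_imp_le order_trans)
      then show "W (xs (n + N)) \<in> {y. f y \<le> ereal (mr + 1/(real N + 1))}" by simp
    qed
    have "yst \<in> {y. f y \<le> ereal (mr + 1/(real N + 1))}"
      by (rule closed_sequentially[OF cl l2 l1])
    then show ?thesis using ysteq by simp
  qed
  have "f (W xst) \<le> ereal mr"
  proof -
    have "f (W xst) < \<infinity>" by (rule le_less_trans[OF bnd[of 0]]) simp
    then obtain v where v: "f (W xst) = ereal v" using fin by blast
    have vb: "v \<le> mr + 1/(real N + 1)" for N :: nat using bnd[of N] v by simp
    have "v \<le> mr"
    proof (rule ccontr)
      assume "\<not> v \<le> mr"
      then have "0 < v - mr" by simp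
      then obtain n :: nat where n: "n > 0" "inverse (real n) < v - mr"
        using ex_inverse_of_nat_less by blast
      have "1 / (real n + 1) \<le> inverse (real n)" using n(1)
        by (simp add: inverse_eq_divide frac_le)
      then have "1 / (real n + 1) < v - mr" using n(2) by (rule le_less_trans)
      then have "mr + 1 / (real n + 1) < v" by simp
      then show False using vb[of n] by simp
    qed
    then show ?thesis using v by simp
  qed
  then have xstmin: "\<forall>x\<in>D. A x = b \<longrightarrow> f (W xst) \<le> f (W x)"
  proof (intro ballI impI)
    fix x assume "x \<in> D" "A x = b"
    then have "x \<in> S" unfolding S_def by simp
    then show "f (W xst) \<le> f (W x)" using mle \<open>f (W xst) \<le> ereal mr\<close> order_trans by blast
  qed
  have uniq: "x1 = x2" if h1: "x1 \<in> D \<and> A x1 = b \<and> (\<forall>x\<in>D. A x = b \<longrightarrow> f (W x1) \<le> f (W x))"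
    and h2: "x2 \<in> D \<and> A x2 = b \<and> (\<forall>x\<in>D. A x = b \<longrightarrow> f (W x2) \<le> f (W x))" for x1 x2
  proof -
    have s1: "x1 \<in> S" and s2: "x2 \<in> S" using h1 h2 unfolding S_def by auto
    have "f (W x1) \<le> f (W x0)" using h1 x0(1) unfolding S_def by auto
    then have "f (W x1) < \<infinity>" using x0(2) by (rule le_less_trans)
    then obtain v where v1: "f (W x1) = ereal v" using fin by blast
    have "f (W x1) \<le> f (W x2)" using h1 s2 unfolding S_def by auto
    moreover have "f (W x2) \<le> f (W x1)" using h2 s1 unfolding S_def by auto
    ultimately have "f (W x1) = f (W x2)" by (rule antisym)
    then have v2: "f (W x2) = ereal v" using v1 by simp
    define q where "q = (norm (W x1 - W x2))^2"
    obtain p where p: "p \<in> S" "f (W p) \<le> ereal ((v + v)/2 - c0/4 * q)"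
      using mid[OF s1 s2 v1 v2] unfolding q_def by blast
    have "f (W x1) \<le> f (W p)" using h1 p(1) unfolding S_def by auto
    then have "ereal v \<le> ereal ((v + v)/2 - c0/4 * q)" using p(2) v1 by (metis order_trans)
    then have "v \<le> (v + v)/2 - c0/4 * q" by simp
    then have "c0/4 * q \<le> 0" by simp
    then have "q \<le> 0" using A2(3) by (simp add: mult_le_0_iff)
    then have "c1 * (norm (x1 - x2))^2 \<le> 0" using nb[OF s1 s2] unfolding q_def by (rule order_trans[rotated])
    then have "(norm (x1 - x2))^2 \<le> 0" using A4(1) by (simp add: mult_le_0_iff)
    then show ?thesis by simp
  qed
  have part1: "\<exists>!xs. xs \<in> D \<and> A xs = b \<and> (\<forall>x\<in>D. A x = b \<longrightarrow> f (W xs) \<le> f (W x))"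
  proof (rule ex1I)
    show "xst \<in> D \<and> A xst = b \<and> (\<forall>x\<in>D. A x = b \<longrightarrow> f (W xst) \<le> f (W x))"
      using xstD \<open>A xst = b\<close> xstmin by blast
  next
    fix y assume "y \<in> D \<and> A y = b \<and> (\<forall>x\<in>D. A x = b \<longrightarrow> f (W y) \<le> f (W x))"
    then show "y = xst" using uniq[of y xst] xstD \<open>A xst = b\<close> xstmin by blast
  qed
  have part2: "\<forall>xs. xs \<in> D \<and> A xs = b \<and> (\<forall>x\<in>D. A x = b \<longrightarrow> f (W xs) \<le> f (W x))
            \<longrightarrow> W xs \<in> effective_domain f"
  proof (intro allI impI)
    fix z assume h: "z \<in> D \<and> A z = b \<and> (\<forall>x\<in>D. A x = b \<longrightarrow> f (W z) \<le> f (W x))"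
    then have "f (W z) \<le> f (W x0)" using x0(1) unfolding S_def by auto
    then have "f (W z) < \<infinity>" using x0(2) by (rule le_less_trans)
    then show "W z \<in> effective_domain f" unfolding effective_domain_def by simp
  qed
  show ?thesis using part1 part2 by (rule conjI)
qed
end
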